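(* Let $X$ be a real Gaussian random variable (normal with positive variance). Then $$\log\mathbb{E}X^2-\mathbb{E}\log X^2\le C_1,\qquad C_1=-\frac{1}{\sqrt{2\pi}}\int_{\mathbb{R}}\log(x^2)e^{-x^2/2}\,dx=1.270362845\ldots,$$ with equality if and only if $\mathbb{E}X=0$. *)

theory Defs
  imports "HOL-Probability.Probability"
begin

definition C1 :: real where
  "C1 = - (1 / sqrt (2 * pi)) * (\<integral>x. ln (x\<^sup>2) * exp (- x\<^sup>2 / 2) \<partial>lborel)"

end

theory Submission
  imports Defs
begin

definition FF :: "real \<Rightarrow> real" where
  "FF t = integral {0..t} (\<lambda>s. exp (s\<^sup>2 / 2))"

definition DD :: "real \<Rightarrow> real" where
  "DD t = exp (- t\<^sup>2 / 2) * FF t"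

lemma FF_deriv_within:
  assumes "0 \<le> t" "t \<le> b"
  shows "(FF has_real_derivative exp (t\<^sup>2 / 2)) (at t within {0..b})"
  unfolding FF_def
  using assms by (intro integral_has_real_derivative continuous_intros) auto

lemma FF_deriv:
  assumes "0 < t"
  shows "(FF has_real_derivative exp (t\<^sup>2 / 2)) (at t)"
proof -
  have "(FF has_real_derivative exp (t\<^sup>2 / 2)) (at t within {0..t+1})"
    using assms by (intro FF_deriv_within) auto
  moreover have "t \<in> interior {0..t+1}" using assms by (simp add: interior_atLeastAtMost_real)
  then have "at t within {0..t+1} = at t" by (rule at_within_interior)
  ultimately show ?thesis by simp
qed

lemma FF_cont: "continuous_on {0..b} FF"
proof (cases "0 \<le> b")
  case True
  show ?thesis
    unfolding continuous_on_eq_continuous_within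
  proof
    fix x assume "x \<in> {0..b}"
    then have "(FF has_real_derivative exp (x\<^sup>2 / 2)) (at x within {0..b})"
      by (intro FF_deriv_within) auto
    then show "continuous (at x within {0..b}) FF"
      using DERIV_continuous by blast
  qed
next
  case False
  then show ?thesis by simp
qed

lemma FF_0 [simp]: "FF 0 = 0" by (simp add: FF_def)

lemma DD_cont: "continuous_on {0..b} DD"
  unfolding DD_def by (intro continuous_intros FF_cont) auto

lemma t1: fixes x e :: real shows "e - ((1 * e + x * (e * (2 * x / 2))) * (1 + x\<^sup>2) - x * e * (2 * x)) / (1 + x\<^sup>2)\<^sup>2 = e * (2 * x\<^sup>2 / (1 + x\<^sup>2)\<^sup>2)"
proof -
  have h: "(1 + x\<^sup>2) \<noteq> 0" by (smt (verit) zero_le_power2)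
  have N: "((1 * e + x * (e * (2 * x / 2))) * (1 + x\<^sup>2) - x * e * (2 * x)) = e * (1 + x\<^sup>2)\<^sup>2 - e * (2 * x\<^sup>2)"
    by (simp add: power2_eq_square algebra_simps)
  show ?thesis unfolding N using h by (simp add: diff_divide_distrib)
qed
lemma t2: fixes x :: real shows "4 * x / (4 + x\<^sup>2 * 4) = 2 * x / (2 + x\<^sup>2 * 2)"
proof -
  have h: "(1 + x\<^sup>2) \<noteq> 0" by (smt (verit) zero_le_power2)
  have "4 * x / (4 + x\<^sup>2 * 4) = x / (1 + x\<^sup>2)" using h by (simp add: field_simps)
  moreover have "2 * x / (2 + x\<^sup>2 * 2) = x / (1 + x\<^sup>2)" using h by (simp add: field_simps)
  ultimately show ?thesis by simp
qed

lemma t3: fixes x :: real shows "2 * x / (2 + x\<^sup>2 * 2) = x / (1 + x\<^sup>2)"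
proof -
  have h: "(1 + x\<^sup>2) \<noteq> 0" by (smt (verit) zero_le_power2)
  then show ?thesis by (simp add: field_simps)
qed

lemma t4: fixes x :: real shows "1 + x\<^sup>2 = 0 \<Longrightarrow> False"
  by (smt (verit) zero_le_power2)

lemma DD_lower:
  assumes "0 < t"
  shows "t / (1 + t\<^sup>2) < DD t"
proof -
  define E where "E t = FF t - t * exp (t\<^sup>2 / 2) / (1 + t\<^sup>2)" for t
  have "E 0 < E t"
  proof (rule DERIV_pos_imp_increasing_open[OF assms])
    fix x :: real assume x: "0 < x" "x < t"
    have h: "1 + x * x \<noteq> 0" by (smt (verit) zero_le_square)
    have "(E has_real_derivative exp (x\<^sup>2/2) - ((1 * exp (x\<^sup>2 / 2) + x * (exp (x\<^sup>2 / 2) * (2 * x / 2))) * (1 + x\<^sup>2) - x * exp (x\<^sup>2 / 2) * (2 * x)) / (1 + x\<^sup>2)\<^sup>2) (at x)"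
      unfolding E_def[abs_def]
      using x h by (auto intro!: derivative_eq_intros FF_deriv simp: power2_eq_square)
    moreover have "exp (x\<^sup>2/2) - ((1 * exp (x\<^sup>2 / 2) + x * (exp (x\<^sup>2 / 2) * (2 * x / 2))) * (1 + x\<^sup>2) - x * exp (x\<^sup>2 / 2) * (2 * x)) / (1 + x\<^sup>2)\<^sup>2
        = exp (x\<^sup>2/2) * (2 * x\<^sup>2 / (1 + x\<^sup>2)\<^sup>2)"
      by (rule t1)
    moreover have "exp (x\<^sup>2/2) * (2 * x\<^sup>2 / (1 + x\<^sup>2)\<^sup>2) > 0"
      using x h by (intro mult_pos_pos divide_pos_pos) (auto simp: power2_eq_square intro!: mult_pos_pos add_pos_nonneg)
    ultimately show "\<exists>y. (E has_real_derivative y) (at x) \<and> 0 < y" by metis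
  next
    show "continuous_on {0..t} E" unfolding E_def[abs_def]
      by (intro continuous_intros FF_cont) (auto dest: t4)
  qed
  then have "t * exp (t\<^sup>2 / 2) / (1 + t\<^sup>2) < FF t" by (simp add: E_def)
  then have ineq: "exp (- t\<^sup>2 / 2) * (t * exp (t\<^sup>2 / 2) / (1 + t\<^sup>2)) < exp (- t\<^sup>2 / 2) * FF t"
    by (intro mult_strict_left_mono) auto
  have e1: "exp (- t\<^sup>2 / 2) * exp (t\<^sup>2 / 2) = 1" by (simp add: exp_add[symmetric])
  have eq: "t / (1 + t\<^sup>2) = exp (- t\<^sup>2 / 2) * (t * exp (t\<^sup>2 / 2) / (1 + t\<^sup>2))"
    using e1 by (metis (no_types) mult.left_commute mult.right_neutral times_divide_eq_right)
  show ?thesis unfolding DD_def eq by (rule ineq)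
qed

lemma intDD_deriv:
  assumes "0 < t"
  shows "((\<lambda>m. integral {0..m} DD) has_real_derivative DD t) (at t)"
proof -
  have "((\<lambda>m. integral {0..m} DD) has_real_derivative DD t) (at t within {0..t+1})"
    by (rule integral_has_real_derivative) (use assms in \<open>auto intro!: DD_cont\<close>)
  moreover have "t \<in> interior {0..t+1}" using assms by (simp add: interior_atLeastAtMost_real)
  then have "at t within {0..t+1} = at t" by (rule at_within_interior)
  ultimately show ?thesis by simp
qed

lemma intDD_cont: "continuous_on {0..b} (\<lambda>m. integral {0..m} DD)"
proof (cases "0 \<le> b")
  case True
  show ?thesis
    unfolding continuous_on_eq_continuous_within
  proof
    fix x assume "x \<in> {0..b}"
    then have "((\<lambda>m. integral {0..m} DD) has_real_derivative DD x) (at x within {0..b})"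
      by (intro integral_has_real_derivative DD_cont) auto
    then show "continuous (at x within {0..b}) (\<lambda>m. integral {0..m} DD)"
      using DERIV_continuous by blast
  qed
next
  case False
  then show ?thesis by simp
qed

lemma step5:
  assumes "0 < m"
  shows "ln (1 + m\<^sup>2) < 2 * integral {0..m} DD"
proof -
  define W where "W m = integral {0..m} DD - ln (1 + m\<^sup>2) / 2" for m
  have "W 0 < W m"
  proof (rule DERIV_pos_imp_increasing_open[OF assms])
    fix x :: real assume x: "0 < x" "x < m"
    have "(W has_real_derivative DD x - (2 * x / (1 + x\<^sup>2)) / 2) (at x)"
      unfolding W_def[abs_def]
      using x apply (auto intro!: derivative_eq_intros intDD_deriv simp: add_pos_nonneg)
      apply (rule t2)
      done
    moreover have "DD x - (2 * x / (1 + x\<^sup>2)) / 2 > 0" using DD_lower[OF x(1)] t3[of x] by simp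
    ultimately show "\<exists>y. (W has_real_derivative y) (at x) \<and> 0 < y" by metis
  next
    show "continuous_on {0..m} W" unfolding W_def[abs_def]
      by (intro continuous_intros intDD_cont) (auto dest: t4)
  qed
  then show ?thesis by (simp add: W_def)
qed

lemma nd1: "normal_density m 1 y = std_normal_density (y - m)"
  by (simp add: normal_density_def)

lemma std_even: "std_normal_density (- x) = std_normal_density x"
  by (simp add: std_normal_density_def)

lemma nn_normal_1: "(\<integral>\<^sup>+z. ennreal (normal_density m s z) \<partial>lborel) = 1" if "0 < s"
  using nn_integral_eq_integrable[of "normal_density m s" lborel 1] that
  by (auto simp: integrable_normal_density)

lemma mgf_std:
  "(\<integral>\<^sup>+z. ennreal (std_normal_density z * exp (s * z)) \<partial>lborel) = ennreal (exp (s\<^sup>2 / 2))"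
proof -
  have eq: "std_normal_density z * exp (s * z) = exp (s\<^sup>2 / 2) * normal_density s 1 z" for z
    by (simp add: normal_density_def exp_add[symmetric] power2_eq_square algebra_simps)
       (simp add: field_simps)
  have "(\<integral>\<^sup>+z. ennreal (std_normal_density z * exp (s * z)) \<partial>lborel)
      = (\<integral>\<^sup>+z. ennreal (exp (s\<^sup>2 / 2)) * ennreal (normal_density s 1 z) \<partial>lborel)"
    by (simp add: eq ennreal_mult)
  also have "\<dots> = ennreal (exp (s\<^sup>2 / 2)) * (\<integral>\<^sup>+z. ennreal (normal_density s 1 z) \<partial>lborel)"
    by (rule nn_integral_cmult) auto
  also have "\<dots> = ennreal (exp (s\<^sup>2 / 2))" by (simp add: nn_normal_1)
  finally show ?thesis .
qed

lemma even_nn: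
  fixes f :: "real \<Rightarrow> real"
  assumes [measurable]: "f \<in> borel_measurable borel" and ev: "\<And>x. f (- x) = f x"
  shows "(\<integral>\<^sup>+x. ennreal (f x) \<partial>lborel) = 2 * (\<integral>\<^sup>+x. ennreal (f x * indicator {0<..} x) \<partial>lborel)"
proof -
  have "(\<integral>\<^sup>+x. ennreal (f x) \<partial>lborel)
      = (\<integral>\<^sup>+x. ennreal (f x * indicator {0<..} x) + ennreal (f x * indicator {..<0} x) \<partial>lborel)"
    by (intro nn_integral_cong_AE eventually_mono[OF AE_lborel_singleton[of 0]])
       (auto simp: indicator_def)
  also have "\<dots> = (\<integral>\<^sup>+x. ennreal (f x * indicator {0<..} x) \<partial>lborel) + (\<integral>\<^sup>+x. ennreal (f x * indicator {..<0} x) \<partial>lborel)"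
    by (rule nn_integral_add) auto
  also have "(\<integral>\<^sup>+x. ennreal (f x * indicator {..<0} x) \<partial>lborel)
      = (\<integral>\<^sup>+x. ennreal (f x * indicator {0<..} x) \<partial>lborel)"
  proof -
    have "(\<integral>\<^sup>+x. ennreal (f x * indicator {..<0} x) \<partial>lborel)
        = ennreal \<bar>-1\<bar> * (\<integral>\<^sup>+x. ennreal (f (0 + -1 * x) * indicator {..<0} (0 + -1 * x)) \<partial>lborel)"
      by (rule nn_integral_real_affine) auto
    also have "\<dots> = (\<integral>\<^sup>+x. ennreal (f x * indicator {0<..} x) \<partial>lborel)"
      by (simp add: ev indicator_def)
    finally show ?thesis .
  qed
  finally show ?thesis by (simp add: mult_2)
qed

lemma ftc_exp:
  assumes "z \<noteq> 0" "0 \<le> t"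
  shows "(\<integral>\<^sup>+s. ennreal (exp (s * z)) * indicator {-t..t} s \<partial>lborel) = ennreal (exp (t * z) / z - exp (- t * z) / z)"
proof -
  have "(\<integral>\<^sup>+s. ennreal (exp (s * z)) * indicator {-t..t} s \<partial>lborel)
     = ennreal (exp (t * z) / z - exp ((- t) * z) / z)"
    by (rule nn_integral_FTC_Icc[where F = "\<lambda>s. exp (s * z) / z"])
       (use assms in \<open>auto intro!: derivative_eq_intros\<close>)
  then show ?thesis by simp
qed

lemma FF_nn:
  assumes "0 \<le> t"
  shows "(\<integral>\<^sup>+s. ennreal (exp (s\<^sup>2 / 2)) * indicator {0..t} s \<partial>lborel) = ennreal (FF t)"
proof -
  have "((\<lambda>s. exp (s\<^sup>2 / 2)) has_integral FF t) {0..t}"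
    unfolding FF_def
    by (rule integrable_integral, rule integrable_continuous_interval, intro continuous_intros) simp
  then show ?thesis
    using nn_integral_has_integral_lebesgue'[of "{0..t}" "\<lambda>s. exp (s\<^sup>2 / 2)" "FF t"] by simp
qed

lemma phi_shift:
  "std_normal_density (z - t) = exp (- t\<^sup>2 / 2) * std_normal_density z * exp (t * z)"
  "std_normal_density (z + t) = exp (- t\<^sup>2 / 2) * std_normal_density z * exp (- t * z)"
  by (simp_all add: std_normal_density_def exp_add[symmetric] power2_eq_square algebra_simps)
     (simp_all add: field_simps)

lemma K4:
  assumes t: "0 \<le> t"
  shows "(\<integral>\<^sup>+z. ennreal ((std_normal_density (z - t) - std_normal_density (z + t)) / z * indicator {0<..} z) \<partial>lborel)
       = ennreal (DD t)"
proof -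
  define k where "k z = (std_normal_density (z - t) - std_normal_density (z + t)) / z" for z
  have kev: "k (- z) = k z" for z
  proof -
    have e1: "std_normal_density (- z - t) = std_normal_density (z + t)"
      by (simp add: std_normal_density_def power2_eq_square algebra_simps)
    have e2: "std_normal_density (- z + t) = std_normal_density (z - t)"
      by (simp add: std_normal_density_def power2_eq_square algebra_simps)
    have gen: "(a - b) / (- z) = (b - a) / z" for a b :: real
      by (cases "z = 0") (auto simp: field_simps)
    show ?thesis unfolding k_def e1 e2 by (rule gen)
  qed
  have kmeas[measurable]: "k \<in> borel_measurable borel" unfolding k_def by measurable
  have 1: "(\<integral>\<^sup>+z. ennreal (k z) \<partial>lborel) = 2 * (\<integral>\<^sup>+z. ennreal (k z * indicator {0<..} z) \<partial>lborel)"
    by (rule even_nn) (auto simp: kev)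
  have 2: "(\<integral>\<^sup>+z. ennreal (k z) \<partial>lborel)
      = (\<integral>\<^sup>+z. \<integral>\<^sup>+s. ennreal (exp (- t\<^sup>2 / 2) * std_normal_density z * exp (s * z) * indicator {-t..t} s) \<partial>lborel \<partial>lborel)"
  proof (intro nn_integral_cong_AE eventually_mono[OF AE_lborel_singleton[of 0]])
    fix z :: real assume z: "z \<noteq> 0"
    have "(\<integral>\<^sup>+s. ennreal (exp (- t\<^sup>2 / 2) * std_normal_density z * exp (s * z) * indicator {-t..t} s) \<partial>lborel)
        = (\<integral>\<^sup>+s. ennreal (exp (- t\<^sup>2 / 2) * std_normal_density z) * (ennreal (exp (s * z)) * indicator {-t..t} s) \<partial>lborel)"
      by (intro nn_integral_cong) (auto simp: indicator_def ennreal_mult)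
    also have "\<dots> = ennreal (exp (- t\<^sup>2 / 2) * std_normal_density z) * (\<integral>\<^sup>+s. ennreal (exp (s * z)) * indicator {-t..t} s \<partial>lborel)"
      by (rule nn_integral_cmult) auto
    also have "\<dots> = ennreal (exp (- t\<^sup>2 / 2) * std_normal_density z) * ennreal (exp (t * z) / z - exp (- t * z) / z)"
      by (simp add: ftc_exp z t)
    also have "\<dots> = ennreal (exp (- t\<^sup>2 / 2) * std_normal_density z * (exp (t * z) / z - exp (- t * z) / z))"
      by (simp add: ennreal_mult')
    also have "exp (- t\<^sup>2 / 2) * std_normal_density z * (exp (t * z) / z - exp (- t * z) / z) = k z"
      using z unfolding k_def phi_shift by (simp add: field_simps)
    finally show "ennreal (k z) = (\<integral>\<^sup>+s. ennreal (exp (- t\<^sup>2 / 2) * std_normal_density z * exp (s * z) * indicator {-t..t} s) \<partial>lborel)"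
      by simp
  qed
  also have "\<dots> = (\<integral>\<^sup>+s. \<integral>\<^sup>+z. ennreal (exp (- t\<^sup>2 / 2) * std_normal_density z * exp (s * z) * indicator {-t..t} s) \<partial>lborel \<partial>lborel)"
    by (rule lborel_pair.Fubini'[symmetric]) measurable
  also have "\<dots> = (\<integral>\<^sup>+s. ennreal (exp (- t\<^sup>2 / 2)) * (ennreal (exp (s\<^sup>2 / 2) * indicator {-t..t} s)) \<partial>lborel)"
  proof (intro nn_integral_cong)
    fix s :: real
    have "(\<integral>\<^sup>+z. ennreal (exp (- t\<^sup>2 / 2) * std_normal_density z * exp (s * z) * indicator {-t..t} s) \<partial>lborel)
       = (\<integral>\<^sup>+z. ennreal (exp (- t\<^sup>2 / 2) * indicator {-t..t} s) * ennreal (std_normal_density z * exp (s * z)) \<partial>lborel)"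
      by (intro nn_integral_cong) (auto simp: indicator_def ennreal_mult mult.assoc)
    also have "\<dots> = ennreal (exp (- t\<^sup>2 / 2) * indicator {-t..t} s) * (\<integral>\<^sup>+z. ennreal (std_normal_density z * exp (s * z)) \<partial>lborel)"
      by (rule nn_integral_cmult) auto
    also have "\<dots> = ennreal (exp (- t\<^sup>2 / 2)) * (ennreal (exp (s\<^sup>2 / 2) * indicator {-t..t} s))"
      by (simp only: mgf_std) (simp add: indicator_def ennreal_mult)
    finally show "(\<integral>\<^sup>+z. ennreal (exp (- t\<^sup>2 / 2) * std_normal_density z * exp (s * z) * indicator {-t..t} s) \<partial>lborel)
       = ennreal (exp (- t\<^sup>2 / 2)) * (ennreal (exp (s\<^sup>2 / 2) * indicator {-t..t} s))" .
  qed
  also have "\<dots> = ennreal (exp (- t\<^sup>2 / 2)) * (\<integral>\<^sup>+s. ennreal (exp (s\<^sup>2 / 2) * indicator {-t..t} s) \<partial>lborel)"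
    by (rule nn_integral_cmult) auto
  also have "(\<integral>\<^sup>+s. ennreal (exp (s\<^sup>2 / 2) * indicator {-t..t} s) \<partial>lborel)
      = 2 * (\<integral>\<^sup>+s. ennreal (exp (s\<^sup>2 / 2) * indicator {-t..t} s * indicator {0<..} s) \<partial>lborel)"
    by (rule even_nn) (auto simp: indicator_def)
  also have "(\<integral>\<^sup>+s. ennreal (exp (s\<^sup>2 / 2) * indicator {-t..t} s * indicator {0<..} s) \<partial>lborel)
      = (\<integral>\<^sup>+s. ennreal (exp (s\<^sup>2 / 2)) * indicator {0..t} s \<partial>lborel)"
    by (intro nn_integral_cong_AE eventually_mono[OF AE_lborel_singleton[of 0]])
       (auto simp: indicator_def)
  also have "\<dots> = ennreal (FF t)" by (rule FF_nn[OF t])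
  finally have "2 * (\<integral>\<^sup>+z. ennreal (k z * indicator {0<..} z) \<partial>lborel) = 2 * ennreal (DD t)"
    unfolding 1 DD_def by (simp add: ennreal_mult'' mult_ac)
  then have "(\<integral>\<^sup>+z. ennreal (k z * indicator {0<..} z) \<partial>lborel) = ennreal (DD t)"
    by (simp add: ennreal_mult_cancel_left)
  then show ?thesis by (simp add: k_def)
qed

definition PP :: "real \<Rightarrow> real \<Rightarrow> real" where
  "PP m z = (\<integral>y. normal_density m 1 y * indicator {-z..z} y \<partial>lborel)"

definition QQ :: "real \<Rightarrow> real \<Rightarrow> real" where
  "QQ m z = (\<integral>y. normal_density m 1 y * indicator {y. z \<le> \<bar>y\<bar>} y \<partial>lborel)"

lemma int_std_affine: "c \<noteq> 0 \<Longrightarrow> integrable lborel (\<lambda>x. std_normal_density (a + c * x))"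
  using lborel_integrable_real_affine_iff[of c "std_normal_density" a] by simp

lemma int_std_ind: "A \<in> sets borel \<Longrightarrow> c \<noteq> 0 \<Longrightarrow> integrable lborel (\<lambda>x. std_normal_density (a + c * x) * indicator A x)"
  by (rule integrable_real_mult_indicator) (auto intro: int_std_affine)

lemma int_nd_ind: "A \<in> sets borel \<Longrightarrow> integrable lborel (\<lambda>x. normal_density m 1 x * indicator A x)"
  by (rule integrable_real_mult_indicator) auto

lemma PP_shift: "PP m z = (\<integral>u. std_normal_density u * indicator {-z-m..z-m} u \<partial>lborel)"
proof -
  have "PP m z = \<bar>1\<bar> *\<^sub>R (\<integral>u. normal_density m 1 (m + 1 * u) * indicator {-z..z} (m + 1 * u) \<partial>lborel)"
    unfolding PP_def by (rule lborel_integral_real_affine) simp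
  also have "\<dots> = (\<integral>u. std_normal_density u * indicator {-z-m..z-m} u \<partial>lborel)"
  proof (simp, intro Bochner_Integration.integral_cong)
    fix u :: real
    have "normal_density m 1 (m + u) = std_normal_density u" by (simp add: normal_density_def)
    then show "normal_density m 1 (m + u) * indicator {- z..z} (m + u) = std_normal_density u * indicator {- z - m..z - m} u"
      by (auto simp: indicator_def)
  qed simp
  finally show ?thesis .
qed

lemma K3:
  assumes z: "0 < z" and m: "0 \<le> m"
  shows "PP 0 z - PP m z = (\<integral>t. (std_normal_density (z - t) - std_normal_density (z + t)) * indicator {0..m} t \<partial>lborel)"
proof -
  let ?f = "\<lambda>S. (\<integral>u. std_normal_density u * indicator S u \<partial>lborel)"
  have intS: "integrable lborel (\<lambda>u. std_normal_density u * indicator S u)" if "S \<in> sets borel" for S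
    using int_std_ind[OF that, of 1 0] by simp
  have P0: "PP 0 z = ?f {-z..z}" using PP_shift[of 0 z] by simp
  have Pm: "PP m z = ?f {-z-m..z-m}" by (rule PP_shift)
  have "?f {-z..z} + ?f {-z-m..<-z} = (\<integral>u. std_normal_density u * indicator {-z..z} u + std_normal_density u * indicator {-z-m..<-z} u \<partial>lborel)"
    by (subst Bochner_Integration.integral_add) (auto intro!: intS)
  also have "\<dots> = (\<integral>u. std_normal_density u * indicator {-z-m..z-m} u + std_normal_density u * indicator {z-m<..z} u \<partial>lborel)"
    using z m by (intro Bochner_Integration.integral_cong) (auto simp: indicator_def)
  also have "\<dots> = ?f {-z-m..z-m} + ?f {z-m<..z}"
    by (subst Bochner_Integration.integral_add) (auto intro!: intS)
  finally have eq: "?f {-z..z} + ?f {-z-m..<-z} = ?f {-z-m..z-m} + ?f {z-m<..z}" .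
  have A: "?f {z-m<..z} = (\<integral>t. std_normal_density (z - t) * indicator {0..m} t \<partial>lborel)"
  proof -
    have "?f {z-m<..z} = \<bar>-1\<bar> *\<^sub>R (\<integral>t. std_normal_density (z + -1 * t) * indicator {z-m<..z} (z + -1 * t) \<partial>lborel)"
      by (rule lborel_integral_real_affine) simp
    also have "\<dots> = (\<integral>t. std_normal_density (z - t) * indicator {0..m} t \<partial>lborel)"
      by (simp, intro integral_cong_AE)
         (auto intro!: eventually_mono[OF AE_lborel_singleton[of m]] simp: indicator_def)
    finally show ?thesis .
  qed
  have B: "?f {-z-m..<-z} = (\<integral>t. std_normal_density (z + t) * indicator {0..m} t \<partial>lborel)"
  proof -
    have "?f {-z-m..<-z} = \<bar>-1\<bar> *\<^sub>R (\<integral>t. std_normal_density (-z + -1 * t) * indicator {-z-m..<-z} (-z + -1 * t) \<partial>lborel)"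
      by (rule lborel_integral_real_affine) simp
    also have "\<dots> = (\<integral>t. std_normal_density (z + t) * indicator {0..m} t \<partial>lborel)"
    proof (simp, intro integral_cong_AE)
      show "AE x in lborel. std_normal_density (- z - x) * indicator {- z - m..<- z} (- z - x) =
                     std_normal_density (z + x) * indicator {0..m} x"
        by (intro eventually_mono[OF AE_lborel_singleton[of 0]])
           (auto simp: indicator_def std_normal_density_def power2_eq_square algebra_simps)
    qed auto
    finally show ?thesis .
  qed
  have "PP 0 z - PP m z = (\<integral>t. std_normal_density (z - t) * indicator {0..m} t \<partial>lborel) - (\<integral>t. std_normal_density (z + t) * indicator {0..m} t \<partial>lborel)"
    using eq A B P0 Pm by simp
  also have "\<dots> = (\<integral>t. std_normal_density (z - t) * indicator {0..m} t - std_normal_density (z + t) * indicator {0..m} t \<partial>lborel)"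
    using int_std_ind[of "{0..m}" "-1" z] int_std_ind[of "{0..m}" "1" z]
    by (subst Bochner_Integration.integral_diff) auto
  also have "\<dots> = (\<integral>t. (std_normal_density (z - t) - std_normal_density (z + t)) * indicator {0..m} t \<partial>lborel)"
    by (simp add: algebra_simps)
  finally show ?thesis .
qed

lemma nd_le: "normal_density m 1 y \<le> 1 / 2"
proof -
  have e: "exp (- (y - m)\<^sup>2 / 2) \<le> 1" by simp
  have s: "2 \<le> sqrt (2 * pi)"
    using pi_gt3 by (intro real_le_rsqrt) auto
  have c: "1 / sqrt (2 * pi) \<le> 1 / 2"
    using s by (intro divide_left_mono) auto
  have "1 / sqrt (2 * pi) * exp (- (y - m)\<^sup>2 / 2) \<le> 1 / 2 * 1"
    using c e by (intro mult_mono) auto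
  moreover have "normal_density m 1 y = 1 / sqrt (2 * pi) * exp (- (y - m)\<^sup>2 / 2)"
    by (simp add: normal_density_def)
  ultimately show ?thesis by simp
qed

lemma PP_nonneg: "0 \<le> PP m z"
  unfolding PP_def by (rule Bochner_Integration.integral_nonneg) auto

lemma QQ_nonneg: "0 \<le> QQ m z"
  unfolding QQ_def by (rule Bochner_Integration.integral_nonneg) auto

lemma PP_le:
  assumes "0 \<le> z" shows "PP m z \<le> z"
proof -
  have "PP m z \<le> (\<integral>y. 1 / 2 * indicator {-z..z} y \<partial>lborel)"
    unfolding PP_def
    by (intro Bochner_Integration.integral_mono int_nd_ind integrable_mult_right integrable_real_indicator)
       (use assms nd_le[of m] in \<open>auto simp: indicator_def emeasure_lborel_Icc\<close>)
  also have "\<dots> = z" using assms by simp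
  finally show ?thesis .
qed

lemma PQ1:
  assumes "0 < z" shows "PP m z + QQ m z = 1"
proof -
  have "PP m z + QQ m z = (\<integral>y. normal_density m 1 y * indicator {-z..z} y + normal_density m 1 y * indicator {y. z \<le> \<bar>y\<bar>} y \<partial>lborel)"
    unfolding PP_def QQ_def
    by (subst Bochner_Integration.integral_add) (auto intro!: int_nd_ind)
  also have "\<dots> = (\<integral>y. normal_density m 1 y \<partial>lborel)"
  proof (rule integral_cong_AE)
    have "AE y in lborel. y \<noteq> z \<and> y \<noteq> -z"
      using AE_lborel_singleton[of z] AE_lborel_singleton[of "-z"] by eventually_elim auto
    then show "AE y in lborel. normal_density m 1 y * indicator {-z..z} y + normal_density m 1 y * indicator {y. z \<le> \<bar>y\<bar>} y = normal_density m 1 y"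
      by eventually_elim (auto simp: indicator_def)
  qed auto
  also have "\<dots> = 1" by simp
  finally show ?thesis .
qed

lemma lnpos_repr:
  "ennreal (max 0 (ln \<bar>y\<bar>)) = (\<integral>\<^sup>+z. ennreal (1 / z) * indicator {1..\<bar>y\<bar>} z \<partial>lborel)"
proof (cases "1 \<le> \<bar>y\<bar>")
  case True
  have "(\<integral>\<^sup>+z. ennreal (1 / z) * indicator {1..\<bar>y\<bar>} z \<partial>lborel) = ennreal (ln \<bar>y\<bar> - ln 1)"
    by (rule nn_integral_FTC_Icc) (use True in \<open>auto intro!: derivative_eq_intros\<close>)
  then show ?thesis using True by simp
next
  case False
  then have "ln \<bar>y\<bar> \<le> 0" by (cases "y = 0") auto
  then show ?thesis using False by simp
qed

lemma lnneg_repr: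
  assumes "y \<noteq> 0"
  shows "ennreal (max 0 (- ln \<bar>y\<bar>)) = (\<integral>\<^sup>+z. ennreal (1 / z) * indicator {\<bar>y\<bar>..1} z \<partial>lborel)"
proof (cases "\<bar>y\<bar> \<le> 1")
  case True
  have "(\<integral>\<^sup>+z. ennreal (1 / z) * indicator {\<bar>y\<bar>..1} z \<partial>lborel) = ennreal (ln 1 - ln \<bar>y\<bar>)"
    by (rule nn_integral_FTC_Icc) (use True assms in \<open>auto intro!: derivative_eq_intros\<close>)
  then show ?thesis using True assms by simp
next
  case False
  then have "0 \<le> ln \<bar>y\<bar>" by simp
  then show ?thesis using False by simp
qed

lemma K1a:
  "(\<integral>\<^sup>+y. ennreal (normal_density m 1 y * max 0 (ln \<bar>y\<bar>)) \<partial>lborel)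
   = (\<integral>\<^sup>+z. ennreal (indicator {1..} z / z * QQ m z) \<partial>lborel)"
proof -
  have "(\<integral>\<^sup>+y. ennreal (normal_density m 1 y * max 0 (ln \<bar>y\<bar>)) \<partial>lborel)
      = (\<integral>\<^sup>+y. \<integral>\<^sup>+z. ennreal (if 1 \<le> z \<and> z \<le> \<bar>y\<bar> then normal_density m 1 y / z else 0) \<partial>lborel \<partial>lborel)"
  proof (intro nn_integral_cong)
    fix y :: real
    have "ennreal (normal_density m 1 y * max 0 (ln \<bar>y\<bar>)) = ennreal (normal_density m 1 y) * ennreal (max 0 (ln \<bar>y\<bar>))"
      by (simp add: ennreal_mult)
    also have "\<dots> = ennreal (normal_density m 1 y) * (\<integral>\<^sup>+z. ennreal (1 / z) * indicator {1..\<bar>y\<bar>} z \<partial>lborel)"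
      by (simp only: lnpos_repr)
    also have "\<dots> = (\<integral>\<^sup>+z. ennreal (normal_density m 1 y) * (ennreal (1 / z) * indicator {1..\<bar>y\<bar>} z) \<partial>lborel)"
      by (rule nn_integral_cmult[symmetric]) measurable
    also have "\<dots> = (\<integral>\<^sup>+z. ennreal (if 1 \<le> z \<and> z \<le> \<bar>y\<bar> then normal_density m 1 y / z else 0) \<partial>lborel)"
      by (intro nn_integral_cong) (auto simp: indicator_def ennreal_mult[symmetric])
    finally show "ennreal (normal_density m 1 y * max 0 (ln \<bar>y\<bar>)) = \<dots>" .
  qed
  also have "\<dots> = (\<integral>\<^sup>+z. \<integral>\<^sup>+y. ennreal (if 1 \<le> z \<and> z \<le> \<bar>y\<bar> then normal_density m 1 y / z else 0) \<partial>lborel \<partial>lborel)"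
    by (rule lborel_pair.Fubini') measurable
  also have "\<dots> = (\<integral>\<^sup>+z. ennreal (indicator {1..} z / z * QQ m z) \<partial>lborel)"
  proof (intro nn_integral_cong)
    fix z :: real
    have "(\<integral>\<^sup>+y. ennreal (if 1 \<le> z \<and> z \<le> \<bar>y\<bar> then normal_density m 1 y / z else 0) \<partial>lborel)
        = (\<integral>\<^sup>+y. ennreal (indicator {1..} z / z) * ennreal (normal_density m 1 y * indicator {y. z \<le> \<bar>y\<bar>} y) \<partial>lborel)"
      by (intro nn_integral_cong) (auto simp: indicator_def ennreal_mult[symmetric])
    also have "\<dots> = ennreal (indicator {1..} z / z) * (\<integral>\<^sup>+y. ennreal (normal_density m 1 y * indicator {y. z \<le> \<bar>y\<bar>} y) \<partial>lborel)"
      by (rule nn_integral_cmult) measurable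
    also have "(\<integral>\<^sup>+y. ennreal (normal_density m 1 y * indicator {y. z \<le> \<bar>y\<bar>} y) \<partial>lborel) = ennreal (QQ m z)"
      unfolding QQ_def by (rule nn_integral_eq_integral) (auto intro!: int_nd_ind)
    also have "ennreal (indicator {1..} z / z) * ennreal (QQ m z) = ennreal (indicator {1..} z / z * QQ m z)"
      using QQ_nonneg[of m z] by (cases "1 \<le> z") (auto simp: indicator_def ennreal_mult'[symmetric])
    finally show "(\<integral>\<^sup>+y. ennreal (if 1 \<le> z \<and> z \<le> \<bar>y\<bar> then normal_density m 1 y / z else 0) \<partial>lborel) = \<dots>" .
  qed
  finally show ?thesis .
qed

lemma K1b:
  "(\<integral>\<^sup>+y. ennreal (normal_density m 1 y * max 0 (- ln \<bar>y\<bar>)) \<partial>lborel)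
   = (\<integral>\<^sup>+z. ennreal (indicator {0<..<1} z / z * PP m z) \<partial>lborel)"
proof -
  have "(\<integral>\<^sup>+y. ennreal (normal_density m 1 y * max 0 (- ln \<bar>y\<bar>)) \<partial>lborel)
      = (\<integral>\<^sup>+y. \<integral>\<^sup>+z. ennreal (if \<bar>y\<bar> \<le> z \<and> z \<le> 1 then normal_density m 1 y / z else 0) \<partial>lborel \<partial>lborel)"
  proof (intro nn_integral_cong_AE eventually_mono[OF AE_lborel_singleton[of 0]])
    fix y :: real assume y: "y \<noteq> 0"
    have "ennreal (normal_density m 1 y * max 0 (- ln \<bar>y\<bar>)) = ennreal (normal_density m 1 y) * ennreal (max 0 (- ln \<bar>y\<bar>))"
      by (simp add: ennreal_mult)
    also have "\<dots> = ennreal (normal_density m 1 y) * (\<integral>\<^sup>+z. ennreal (1 / z) * indicator {\<bar>y\<bar>..1} z \<partial>lborel)"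
      by (simp only: lnneg_repr[OF y])
    also have "\<dots> = (\<integral>\<^sup>+z. ennreal (normal_density m 1 y) * (ennreal (1 / z) * indicator {\<bar>y\<bar>..1} z) \<partial>lborel)"
      by (rule nn_integral_cmult[symmetric]) measurable
    also have "\<dots> = (\<integral>\<^sup>+z. ennreal (if \<bar>y\<bar> \<le> z \<and> z \<le> 1 then normal_density m 1 y / z else 0) \<partial>lborel)"
      by (intro nn_integral_cong) (auto simp: indicator_def ennreal_mult[symmetric])
    finally show "ennreal (normal_density m 1 y * max 0 (- ln \<bar>y\<bar>)) = \<dots>" .
  qed
  also have "\<dots> = (\<integral>\<^sup>+z. \<integral>\<^sup>+y. ennreal (if \<bar>y\<bar> \<le> z \<and> z \<le> 1 then normal_density m 1 y / z else 0) \<partial>lborel \<partial>lborel)"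
    by (rule lborel_pair.Fubini') measurable
  also have "\<dots> = (\<integral>\<^sup>+z. ennreal (indicator {0<..<1} z / z * PP m z) \<partial>lborel)"
  proof (intro nn_integral_cong_AE eventually_mono[OF AE_lborel_singleton[of 1]])
    fix z :: real assume z1: "z \<noteq> 1"
    have "(\<integral>\<^sup>+y. ennreal (if \<bar>y\<bar> \<le> z \<and> z \<le> 1 then normal_density m 1 y / z else 0) \<partial>lborel)
        = (\<integral>\<^sup>+y. ennreal (indicator {0<..1} z / z) * ennreal (normal_density m 1 y * indicator {-z..z} y) \<partial>lborel)"
      by (intro nn_integral_cong) (auto simp: indicator_def ennreal_mult[symmetric])
    also have "\<dots> = ennreal (indicator {0<..1} z / z) * (\<integral>\<^sup>+y. ennreal (normal_density m 1 y * indicator {-z..z} y) \<partial>lborel)"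
      by (rule nn_integral_cmult) measurable
    also have "(\<integral>\<^sup>+y. ennreal (normal_density m 1 y * indicator {-z..z} y) \<partial>lborel) = ennreal (PP m z)"
      unfolding PP_def by (rule nn_integral_eq_integral) (auto intro!: int_nd_ind)
    also have "ennreal (indicator {0<..1} z / z) * ennreal (PP m z) = ennreal (indicator {0<..<1} z / z * PP m z)"
      using z1 PP_nonneg[of m z] by (cases "0 < z \<and> z \<le> 1") (auto simp: indicator_def ennreal_mult'[symmetric])
    finally show "(\<integral>\<^sup>+y. ennreal (if \<bar>y\<bar> \<le> z \<and> z \<le> 1 then normal_density m 1 y / z else 0) \<partial>lborel) = \<dots>" .
  qed
  finally show ?thesis .
qed

lemma phi_mono:
  assumes "0 \<le> z" "0 \<le> t"
  shows "std_normal_density (z + t) \<le> std_normal_density (z - t)"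
proof -
  have "(z - t)\<^sup>2 \<le> (z + t)\<^sup>2" using assms by (simp add: power2_eq_square algebra_simps)
  then have "exp (- (z + t)\<^sup>2 / 2) \<le> exp (- (z - t)\<^sup>2 / 2)" by simp
  then show ?thesis unfolding std_normal_density_def by (intro mult_left_mono) auto
qed

lemma DD_nonneg: "0 \<le> t \<Longrightarrow> 0 \<le> DD t"
  unfolding DD_def FF_def
  by (intro mult_nonneg_nonneg Henstock_Kurzweil_Integration.integral_nonneg
        integrable_continuous_interval continuous_intros) auto

lemma int_Lp: "integrable lborel (\<lambda>y. normal_density m 1 y * max 0 (ln \<bar>y\<bar>))"
proof (rule Bochner_Integration.integrable_bound)
  show "integrable lborel (\<lambda>y. normal_density m 1 y * \<bar>y - m\<bar> ^ 1 + \<bar>m\<bar> * normal_density m 1 y)"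
    by (intro Bochner_Integration.integrable_add integrable_normal_moment_abs integrable_mult_right integrable_normal_density) auto
  show "AE y in lborel. norm (normal_density m 1 y * max 0 (ln \<bar>y\<bar>)) \<le> norm (normal_density m 1 y * \<bar>y - m\<bar> ^ 1 + \<bar>m\<bar> * normal_density m 1 y)"
  proof (intro AE_I2)
    fix y :: real
    have "max 0 (ln \<bar>y\<bar>) \<le> \<bar>y\<bar>"
    proof (cases "y = 0")
      case False
      then have "ln \<bar>y\<bar> \<le> \<bar>y\<bar> - 1" by (intro ln_le_minus_one) auto
      then show ?thesis by simp
    qed simp
    also have "\<dots> \<le> \<bar>y - m\<bar> + \<bar>m\<bar>" by simp
    finally have "normal_density m 1 y * max 0 (ln \<bar>y\<bar>) \<le> normal_density m 1 y * (\<bar>y - m\<bar> + \<bar>m\<bar>)"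
      by (intro mult_left_mono) auto
    then show "norm (normal_density m 1 y * max 0 (ln \<bar>y\<bar>)) \<le> norm (normal_density m 1 y * \<bar>y - m\<bar> ^ 1 + \<bar>m\<bar> * normal_density m 1 y)"
      by (simp add: algebra_simps)
  qed
qed measurable

lemma Bn_le: "(\<integral>\<^sup>+y. ennreal (normal_density m 1 y * max 0 (- ln \<bar>y\<bar>)) \<partial>lborel) \<le> 1"
proof -
  have "(\<integral>\<^sup>+y. ennreal (normal_density m 1 y * max 0 (- ln \<bar>y\<bar>)) \<partial>lborel)
      = (\<integral>\<^sup>+z. ennreal (indicator {0<..<1} z / z * PP m z) \<partial>lborel)" by (rule K1b)
  also have "\<dots> \<le> (\<integral>\<^sup>+z. indicator {0..1::real} z \<partial>lborel)"
  proof (rule Nonnegative_Lebesgue_Integration.nn_integral_mono)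
    fix z :: real
    show "ennreal (indicator {0<..<1} z / z * PP m z) \<le> indicator {0..1} z"
    proof (cases "0 < z \<and> z < 1")
      case True
      then have "PP m z / z \<le> 1" using PP_le[of z m] by (simp add: divide_le_eq)
      then show ?thesis using True by (simp add: indicator_def)
    qed (auto simp: indicator_def)
  qed
  also have "\<dots> = 1" by simp
  finally show ?thesis .
qed

lemma int_Ln: "integrable lborel (\<lambda>y. normal_density m 1 y * max 0 (- ln \<bar>y\<bar>))"
proof (rule integrableI_bounded)
  have "(\<integral>\<^sup>+y. ennreal (norm (normal_density m 1 y * max 0 (- ln \<bar>y\<bar>))) \<partial>lborel)
      = (\<integral>\<^sup>+y. ennreal (normal_density m 1 y * max 0 (- ln \<bar>y\<bar>)) \<partial>lborel)"
    by (intro nn_integral_cong) simp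
  also have "\<dots> < \<infinity>" using Bn_le[of m] by (simp add: le_less_trans)
  finally show "(\<integral>\<^sup>+y. ennreal (norm (normal_density m 1 y * max 0 (- ln \<bar>y\<bar>))) \<partial>lborel) < \<infinity>" .
qed measurable

definition gg :: "real \<Rightarrow> real" where
  "gg m = (\<integral>y. ln (y\<^sup>2) * normal_density m 1 y \<partial>lborel)"

lemma ln_sq: fixes y :: real shows "ln (y\<^sup>2) = 2 * max 0 (ln \<bar>y\<bar>) - 2 * max 0 (- ln \<bar>y\<bar>)"
proof (cases "y = 0")
  case False
  then have "ln (y\<^sup>2) = 2 * ln \<bar>y\<bar>" using ln_realpow[of "\<bar>y\<bar>" 2] by simp
  then show ?thesis by simp
qed simp

lemma int_g: "integrable lborel (\<lambda>y. ln (y\<^sup>2) * normal_density m 1 y)"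
proof -
  have "integrable lborel (\<lambda>y. 2 * (normal_density m 1 y * max 0 (ln \<bar>y\<bar>)) - 2 * (normal_density m 1 y * max 0 (- ln \<bar>y\<bar>)))"
    by (intro Bochner_Integration.integrable_diff integrable_mult_right int_Lp int_Ln)
  moreover have "(\<lambda>y. 2 * (normal_density m 1 y * max 0 (ln \<bar>y\<bar>)) - 2 * (normal_density m 1 y * max 0 (- ln \<bar>y\<bar>)))
      = (\<lambda>y. ln (y\<^sup>2) * normal_density m 1 y)"
    by (rule ext) (simp only: ln_sq, simp add: algebra_simps)
  ultimately show ?thesis by simp
qed

lemma gg_split:
  "gg m = 2 * (\<integral>y. normal_density m 1 y * max 0 (ln \<bar>y\<bar>) \<partial>lborel) - 2 * (\<integral>y. normal_density m 1 y * max 0 (- ln \<bar>y\<bar>) \<partial>lborel)"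
proof -
  have "gg m = (\<integral>y. 2 * (normal_density m 1 y * max 0 (ln \<bar>y\<bar>)) - 2 * (normal_density m 1 y * max 0 (- ln \<bar>y\<bar>)) \<partial>lborel)"
    unfolding gg_def by (intro Bochner_Integration.integral_cong) (simp_all only: ln_sq, simp add: algebra_simps)
  also have "\<dots> = 2 * (\<integral>y. normal_density m 1 y * max 0 (ln \<bar>y\<bar>) \<partial>lborel) - 2 * (\<integral>y. normal_density m 1 y * max 0 (- ln \<bar>y\<bar>) \<partial>lborel)"
    by (subst Bochner_Integration.integral_diff) (auto intro!: integrable_mult_right int_Lp int_Ln)
  finally show ?thesis .
qed

lemma gg_even: "gg (- m) = gg m"
proof -
  have "gg (- m) = \<bar>-1\<bar> *\<^sub>R (\<integral>y. ln ((0 + -1 * y)\<^sup>2) * normal_density (- m) 1 (0 + -1 * y) \<partial>lborel)"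
    unfolding gg_def by (rule lborel_integral_real_affine) simp
  also have "\<dots> = gg m"
    unfolding gg_def
  proof (simp, intro Bochner_Integration.integral_cong)
    fix y :: real
    show "ln (y\<^sup>2) * normal_density (- m) 1 (- y) = ln (y\<^sup>2) * normal_density m 1 y"
      by (simp add: normal_density_def power2_eq_square algebra_simps)
  qed simp
  finally show ?thesis .
qed

lemma rho_nonneg:
  assumes "0 \<le> z"
  shows "0 \<le> (std_normal_density (z - t) - std_normal_density (z + t)) * indicator {0..m} t"
  using phi_mono[OF assms, of t] by (auto simp: indicator_def)

lemma PP_meas[measurable]: "(\<lambda>z. PP k z) \<in> borel_measurable borel"
proof -
  have "(\<lambda>z. PP k z) = (\<lambda>z. \<integral>y. normal_density k 1 y * (if - z \<le> y \<and> y \<le> z then 1 else 0) \<partial>lborel)"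
    unfolding PP_def indicator_def of_bool_def by simp
  also have "\<dots> \<in> borel_measurable borel" by measurable
  finally show ?thesis .
qed

lemma QQ_meas[measurable]: "(\<lambda>z. QQ k z) \<in> borel_measurable borel"
proof -
  have "(\<lambda>z. QQ k z) = (\<lambda>z. \<integral>y. normal_density k 1 y * (if z \<le> \<bar>y\<bar> then 1 else 0) \<partial>lborel)"
    unfolding QQ_def indicator_def of_bool_def by simp
  also have "\<dots> \<in> borel_measurable borel" by measurable
  finally show ?thesis .
qed

lemma R_repr:
  assumes z: "0 < z" and m: "0 \<le> m"
  shows "ennreal (PP 0 z - PP m z) = (\<integral>\<^sup>+t. ennreal ((std_normal_density (z - t) - std_normal_density (z + t)) * indicator {0..m} t) \<partial>lborel)"
proof -
  have "integrable lborel (\<lambda>t. (std_normal_density (z - t) - std_normal_density (z + t)) * indicator {0..m} t)"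
  proof -
    have "integrable lborel (\<lambda>t. std_normal_density (z + -1 * t) * indicator {0..m} t - std_normal_density (z + 1 * t) * indicator {0..m} t)"
      by (intro Bochner_Integration.integrable_diff int_std_ind) auto
    then show ?thesis by (simp add: algebra_simps)
  qed
  then show ?thesis unfolding K3[OF z m]
    using z by (intro nn_integral_eq_integral[symmetric] AE_I2 rho_nonneg) auto
qed

lemma R_nonneg:
  assumes z: "0 < z" and m: "0 \<le> m"
  shows "0 \<le> PP 0 z - PP m z"
  unfolding K3[OF z m]
  using z by (intro Bochner_Integration.integral_nonneg rho_nonneg) auto

lemma S_eq:
  assumes m: "0 \<le> m"
  shows "(\<integral>\<^sup>+z. ennreal (indicator {0<..} z / z * (PP 0 z - PP m z)) \<partial>lborel) = ennreal (integral {0..m} DD)"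
proof -
  have "(\<integral>\<^sup>+z. ennreal (indicator {0<..} z / z * (PP 0 z - PP m z)) \<partial>lborel)
      = (\<integral>\<^sup>+z. \<integral>\<^sup>+t. ennreal (indicator {0<..} z / z * ((std_normal_density (z - t) - std_normal_density (z + t)) * indicator {0..m} t)) \<partial>lborel \<partial>lborel)"
  proof (intro nn_integral_cong)
    fix z :: real
    show "ennreal (indicator {0<..} z / z * (PP 0 z - PP m z))
        = (\<integral>\<^sup>+t. ennreal (indicator {0<..} z / z * ((std_normal_density (z - t) - std_normal_density (z + t)) * indicator {0..m} t)) \<partial>lborel)"
    proof (cases "0 < z")
      case True
      have "ennreal (indicator {0<..} z / z * (PP 0 z - PP m z)) = ennreal (1 / z) * ennreal (PP 0 z - PP m z)"
        using True by (simp add: ennreal_mult'[symmetric] indicator_def)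
      also have "\<dots> = ennreal (1 / z) * (\<integral>\<^sup>+t. ennreal ((std_normal_density (z - t) - std_normal_density (z + t)) * indicator {0..m} t) \<partial>lborel)"
        by (simp only: R_repr[OF True m])
      also have "\<dots> = (\<integral>\<^sup>+t. ennreal (1 / z) * ennreal ((std_normal_density (z - t) - std_normal_density (z + t)) * indicator {0..m} t) \<partial>lborel)"
        by (rule nn_integral_cmult[symmetric]) measurable
      also have "\<dots> = (\<integral>\<^sup>+t. ennreal (indicator {0<..} z / z * ((std_normal_density (z - t) - std_normal_density (z + t)) * indicator {0..m} t)) \<partial>lborel)"
        using True by (intro nn_integral_cong) (simp add: ennreal_mult'[symmetric] indicator_def)
      finally show ?thesis .
    qed simp
  qed
  also have "\<dots> = (\<integral>\<^sup>+t. \<integral>\<^sup>+z. ennreal (indicator {0<..} z / z * ((std_normal_density (z - t) - std_normal_density (z + t)) * indicator {0..m} t)) \<partial>lborel \<partial>lborel)"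
    by (rule lborel_pair.Fubini'[symmetric]) measurable
  also have "\<dots> = (\<integral>\<^sup>+t. ennreal (DD t) * indicator {0..m} t \<partial>lborel)"
  proof (intro nn_integral_cong)
    fix t :: real
    show "(\<integral>\<^sup>+z. ennreal (indicator {0<..} z / z * ((std_normal_density (z - t) - std_normal_density (z + t)) * indicator {0..m} t)) \<partial>lborel)
        = ennreal (DD t) * indicator {0..m} t"
    proof (cases "t \<in> {0..m}")
      case True
      have "(\<integral>\<^sup>+z. ennreal (indicator {0<..} z / z * ((std_normal_density (z - t) - std_normal_density (z + t)) * indicator {0..m} t)) \<partial>lborel)
          = (\<integral>\<^sup>+z. ennreal ((std_normal_density (z - t) - std_normal_density (z + t)) / z * indicator {0<..} z) \<partial>lborel)"
        using True by (intro nn_integral_cong) (simp add: indicator_def)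
      also have "\<dots> = ennreal (DD t)" using True by (intro K4) auto
      finally show ?thesis using True by simp
    qed simp
  qed
  also have "\<dots> = ennreal (integral {0..m} DD)"
  proof (rule nn_integral_has_integral_lebesgue')
    show "(DD has_integral integral {0..m} DD) {0..m}"
      by (intro integrable_integral integrable_continuous_interval DD_cont)
  qed (auto intro: DD_nonneg)
  finally show ?thesis .
qed

lemma core:
  assumes m: "0 \<le> m"
  shows "gg m - gg 0 = 2 * integral {0..m} DD"
proof -
  define R where "R z = PP 0 z - PP m z" for z
  define a where "a m = (\<integral>y. normal_density m 1 y * max 0 (ln \<bar>y\<bar>) \<partial>lborel)" for m
  define b where "b m = (\<integral>y. normal_density m 1 y * max 0 (- ln \<bar>y\<bar>) \<partial>lborel)" for m
  define Ra where "Ra = (\<integral>\<^sup>+z. ennreal (indicator {1..} z / z * R z) \<partial>lborel)"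
  define Rb where "Rb = (\<integral>\<^sup>+z. ennreal (indicator {0<..<1} z / z * R z) \<partial>lborel)"
  have Rnn: "0 < z \<Longrightarrow> 0 \<le> R z" for z unfolding R_def using R_nonneg m by simp
  have Rmeas[measurable]: "R \<in> borel_measurable borel"
    unfolding R_def[abs_def] by measurable
  have ea: "ennreal (a k) = (\<integral>\<^sup>+y. ennreal (normal_density k 1 y * max 0 (ln \<bar>y\<bar>)) \<partial>lborel)" for k
    unfolding a_def by (rule nn_integral_eq_integral[symmetric]) (auto intro: int_Lp)
  have eb: "ennreal (b k) = (\<integral>\<^sup>+y. ennreal (normal_density k 1 y * max 0 (- ln \<bar>y\<bar>)) \<partial>lborel)" for k
    unfolding b_def by (rule nn_integral_eq_integral[symmetric]) (auto intro: int_Ln)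
  have a0: "0 \<le> a k" for k unfolding a_def by (intro Bochner_Integration.integral_nonneg) auto
  have b0: "0 \<le> b k" for k unfolding b_def by (intro Bochner_Integration.integral_nonneg) auto
  have A: "ennreal (a m) = ennreal (a 0) + Ra"
  proof -
    have "ennreal (a m) = (\<integral>\<^sup>+z. ennreal (indicator {1..} z / z * QQ m z) \<partial>lborel)"
      unfolding ea by (rule K1a)
    also have "\<dots> = (\<integral>\<^sup>+z. ennreal (indicator {1..} z / z * QQ 0 z) + ennreal (indicator {1..} z / z * R z) \<partial>lborel)"
    proof (intro nn_integral_cong)
      fix z :: real
      show "ennreal (indicator {1..} z / z * QQ m z) = ennreal (indicator {1..} z / z * QQ 0 z) + ennreal (indicator {1..} z / z * R z)"
      proof (cases "1 \<le> z")
        case True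
        then have "QQ m z = QQ 0 z + R z" unfolding R_def using PQ1[of z m] PQ1[of z 0] by simp
        then have "indicator {1..} z / z * QQ m z = indicator {1..} z / z * QQ 0 z + indicator {1..} z / z * R z"
          using True by (simp add: field_simps)
        moreover have "0 \<le> indicator {1..} z / z * QQ 0 z" using True QQ_nonneg[of 0 z] by simp
        moreover have "0 \<le> indicator {1..} z / z * R z" using True Rnn[of z] by simp
        ultimately show ?thesis by (simp add: ennreal_plus)
      qed simp
    qed
    also have "\<dots> = (\<integral>\<^sup>+z. ennreal (indicator {1..} z / z * QQ 0 z) \<partial>lborel) + Ra"
      unfolding Ra_def by (rule nn_integral_add) auto
    also have "(\<integral>\<^sup>+z. ennreal (indicator {1..} z / z * QQ 0 z) \<partial>lborel) = ennreal (a 0)"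
      unfolding ea by (rule K1a[symmetric])
    finally show ?thesis .
  qed
  have B: "ennreal (b 0) = ennreal (b m) + Rb"
  proof -
    have "ennreal (b 0) = (\<integral>\<^sup>+z. ennreal (indicator {0<..<1} z / z * PP 0 z) \<partial>lborel)"
      unfolding eb by (rule K1b)
    also have "\<dots> = (\<integral>\<^sup>+z. ennreal (indicator {0<..<1} z / z * PP m z) + ennreal (indicator {0<..<1} z / z * R z) \<partial>lborel)"
    proof (intro nn_integral_cong)
      fix z :: real
      show "ennreal (indicator {0<..<1} z / z * PP 0 z) = ennreal (indicator {0<..<1} z / z * PP m z) + ennreal (indicator {0<..<1} z / z * R z)"
      proof (cases "0 < z \<and> z < 1")
        case True
        then have "PP 0 z = PP m z + R z" unfolding R_def by simp
        then have "indicator {0<..<1} z / z * PP 0 z = indicator {0<..<1} z / z * PP m z + indicator {0<..<1} z / z * R z"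
          using True by (simp add: field_simps)
        moreover have "0 \<le> indicator {0<..<1} z / z * PP m z" using True PP_nonneg[of m z] by simp
        moreover have "0 \<le> indicator {0<..<1} z / z * R z" using True Rnn[of z] by simp
        ultimately show ?thesis by (simp add: ennreal_plus)
      qed (auto simp: indicator_def)
    qed
    also have "\<dots> = (\<integral>\<^sup>+z. ennreal (indicator {0<..<1} z / z * PP m z) \<partial>lborel) + Rb"
      unfolding Rb_def by (rule nn_integral_add) auto
    also have "(\<integral>\<^sup>+z. ennreal (indicator {0<..<1} z / z * PP m z) \<partial>lborel) = ennreal (b m)"
      unfolding eb by (rule K1b[symmetric])
    finally show ?thesis .
  qed
  have S: "Ra + Rb = ennreal (integral {0..m} DD)"
  proof -
    have "Ra + Rb = (\<integral>\<^sup>+z. ennreal (indicator {1..} z / z * R z) + ennreal (indicator {0<..<1} z / z * R z) \<partial>lborel)"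
      unfolding Ra_def Rb_def by (rule nn_integral_add[symmetric]) auto
    also have "\<dots> = (\<integral>\<^sup>+z. ennreal (indicator {0<..} z / z * (PP 0 z - PP m z)) \<partial>lborel)"
    proof (intro nn_integral_cong)
      fix z :: real
      show "ennreal (indicator {1..} z / z * R z) + ennreal (indicator {0<..<1} z / z * R z) = ennreal (indicator {0<..} z / z * (PP 0 z - PP m z))"
        unfolding R_def[symmetric] by (auto simp: indicator_def)
    qed
    also have "\<dots> = ennreal (integral {0..m} DD)" by (rule S_eq[OF m])
    finally show ?thesis .
  qed
  obtain ra where ra: "Ra = ennreal ra" "0 \<le> ra"
    using S by (cases Ra rule: ennreal_cases) auto
  obtain rb where rb: "Rb = ennreal rb" "0 \<le> rb"
    using S by (cases Rb rule: ennreal_cases) auto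
  have I0: "0 \<le> integral {0..m} DD"
    by (intro Henstock_Kurzweil_Integration.integral_nonneg integrable_continuous_interval DD_cont DD_nonneg) auto
  have "ennreal (a m) = ennreal (a 0 + ra)" using A ra by (subst ennreal_plus) (auto simp: a0)
  then have am: "a m = a 0 + ra" using a0[of m] a0[of 0] ra(2) by (subst (asm) ennreal_inj) auto
  have "ennreal (b 0) = ennreal (b m + rb)" using B rb by (subst ennreal_plus) (auto simp: b0)
  then have bm: "b 0 = b m + rb" using b0[of m] b0[of 0] rb(2) by (subst (asm) ennreal_inj) auto
  have "ennreal (integral {0..m} DD) = ennreal (ra + rb)" using S ra rb by (subst ennreal_plus) auto
  then have Iab: "integral {0..m} DD = ra + rb" using I0 ra(2) rb(2) by (subst (asm) ennreal_inj) auto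
  note am bm Iab
  moreover have "gg k = 2 * a k - 2 * b k" for k unfolding a_def b_def by (rule gg_split)
  ultimately show ?thesis by simp
qed

lemma key:
  "ln (1 + m\<^sup>2) \<le> gg m - gg 0 \<and> (ln (1 + m\<^sup>2) = gg m - gg 0 \<longleftrightarrow> m = 0)"
proof -
  have pos: "ln (1 + m\<^sup>2) < gg m - gg 0" if "0 < m" for m
    using core[of m] step5[OF that] that by simp
  show ?thesis
  proof (cases "m = 0")
    case True then show ?thesis by simp
  next
    case False
    then have "ln (1 + m\<^sup>2) < gg m - gg 0"
    proof (cases "0 < m")
      case True then show ?thesis by (rule pos)
    next
      case False
      with \<open>m \<noteq> 0\<close> have "0 < - m" by simp
      from pos[OF this] show ?thesis by (simp add: gg_even)
    qed
    then show ?thesis using False by simp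
  qed
qed

lemma nd_scale:
  assumes "0 < \<sigma>"
  shows "\<sigma> * normal_density \<mu> \<sigma> (\<sigma> * y) = normal_density (\<mu> / \<sigma>) 1 y"
  using assms
  by (simp add: normal_density_def real_sqrt_mult field_simps)

lemma C1_eq: "C1 = - gg 0"
proof -
  have "gg 0 = (\<integral>y. 1 / sqrt (2 * pi) * (ln (y\<^sup>2) * exp (- y\<^sup>2 / 2)) \<partial>lborel)"
    unfolding gg_def by (intro Bochner_Integration.integral_cong) (simp_all add: std_normal_density_def)
  also have "\<dots> = 1 / sqrt (2 * pi) * (\<integral>y. ln (y\<^sup>2) * exp (- y\<^sup>2 / 2) \<partial>lborel)"
    by (rule integral_mult_right_zero)
  finally show ?thesis unfolding C1_def by simp
qed

theorem lemma5p1: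
  fixes M :: "'a measure" and X :: "'a \<Rightarrow> real" and \<mu> \<sigma> :: real
  assumes "prob_space M"
    and "0 < \<sigma>"
    and "distributed M lborel X (normal_density \<mu> \<sigma>)"
  shows "ln (\<integral>\<omega>. (X \<omega>)\<^sup>2 \<partial>M) - (\<integral>\<omega>. ln ((X \<omega>)\<^sup>2) \<partial>M) \<le> C1
       \<and> (ln (\<integral>\<omega>. (X \<omega>)\<^sup>2 \<partial>M) - (\<integral>\<omega>. ln ((X \<omega>)\<^sup>2) \<partial>M) = C1
            \<longleftrightarrow> (\<integral>\<omega>. X \<omega> \<partial>M) = 0)"
proof -
  interpret prob_space M by fact
  note D = assms(3)
  have s: "0 < \<sigma>" by fact
  define m where "m = \<mu> / \<sigma>"
  have E1: "(\<integral>\<omega>. X \<omega> \<partial>M) = \<mu>"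
    using normal_distributed_expectation[OF s D] by simp
  have E2: "(\<integral>\<omega>. (X \<omega>)\<^sup>2 \<partial>M) = \<mu>\<^sup>2 + \<sigma>\<^sup>2"
  proof -
    have "(\<integral>\<omega>. (X \<omega>)\<^sup>2 \<partial>M) = (\<integral>x. normal_density \<mu> \<sigma> x * x\<^sup>2 \<partial>lborel)"
      by (rule distributed_integral[OF D, symmetric]) auto
    also have "\<dots> = (\<integral>x. normal_density \<mu> \<sigma> x * (x - \<mu>) ^ (2 * 1) + (2 * \<mu> * (normal_density \<mu> \<sigma> x * x) - \<mu>\<^sup>2 * normal_density \<mu> \<sigma> x) \<partial>lborel)"
      by (intro Bochner_Integration.integral_cong) (simp_all add: power2_eq_square algebra_simps)
    also have "\<dots> = (\<integral>x. normal_density \<mu> \<sigma> x * (x - \<mu>) ^ (2 * 1) \<partial>lborel) + (2 * \<mu> * (\<integral>x. normal_density \<mu> \<sigma> x * x \<partial>lborel) - \<mu>\<^sup>2 * (\<integral>x. normal_density \<mu> \<sigma> x \<partial>lborel))"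
      using s by (simp add: integrable_normal_moment integrable_normal_moment_nz_1)
    also have "\<dots> = \<sigma>\<^sup>2 + (2 * \<mu> * \<mu> - \<mu>\<^sup>2)"
      using s integral_normal_moment_even[OF s, of \<mu> 1] by (simp add: integral_normal_moment_nz_1)
    finally show ?thesis by (simp add: power2_eq_square)
  qed
  have E3: "(\<integral>\<omega>. ln ((X \<omega>)\<^sup>2) \<partial>M) = ln (\<sigma>\<^sup>2) + gg m"
  proof -
    have "(\<integral>\<omega>. ln ((X \<omega>)\<^sup>2) \<partial>M) = (\<integral>x. normal_density \<mu> \<sigma> x * ln (x\<^sup>2) \<partial>lborel)"
      by (rule distributed_integral[OF D, symmetric]) auto
    also have "\<dots> = \<bar>\<sigma>\<bar> *\<^sub>R (\<integral>y. normal_density \<mu> \<sigma> (0 + \<sigma> * y) * ln ((0 + \<sigma> * y)\<^sup>2) \<partial>lborel)"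
      using s by (intro lborel_integral_real_affine) simp
    also have "\<dots> = (\<integral>y. ln (\<sigma>\<^sup>2) * normal_density m 1 y + ln (y\<^sup>2) * normal_density m 1 y \<partial>lborel)"
    proof -
      have "\<bar>\<sigma>\<bar> *\<^sub>R (\<integral>y. normal_density \<mu> \<sigma> (0 + \<sigma> * y) * ln ((0 + \<sigma> * y)\<^sup>2) \<partial>lborel)
          = (\<integral>y. \<sigma> * (normal_density \<mu> \<sigma> (\<sigma> * y) * ln ((\<sigma> * y)\<^sup>2)) \<partial>lborel)"
        using s by simp
      also have "\<dots> = (\<integral>y. ln (\<sigma>\<^sup>2) * normal_density m 1 y + ln (y\<^sup>2) * normal_density m 1 y \<partial>lborel)"
      proof (intro integral_cong_AE)
        show "AE y in lborel. \<sigma> * (normal_density \<mu> \<sigma> (\<sigma> * y) * ln ((\<sigma> * y)\<^sup>2)) = ln (\<sigma>\<^sup>2) * normal_density m 1 y + ln (y\<^sup>2) * normal_density m 1 y"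
        proof (intro eventually_mono[OF AE_lborel_singleton[of 0]])
          fix y :: real assume y: "y \<noteq> 0"
          have L: "ln ((\<sigma> * y)\<^sup>2) = ln (\<sigma>\<^sup>2) + ln (y\<^sup>2)"
            using s y by (simp add: power_mult_distrib ln_mult)
          have N: "\<sigma> * normal_density \<mu> \<sigma> (\<sigma> * y) = normal_density m 1 y"
            using nd_scale[OF s, of \<mu> y] unfolding m_def .
          have "\<sigma> * (normal_density \<mu> \<sigma> (\<sigma> * y) * ln ((\<sigma> * y)\<^sup>2))
              = (\<sigma> * normal_density \<mu> \<sigma> (\<sigma> * y)) * (ln (\<sigma>\<^sup>2) + ln (y\<^sup>2))"
            by (simp only: L mult.assoc)
          also have "\<dots> = normal_density m 1 y * (ln (\<sigma>\<^sup>2) + ln (y\<^sup>2))" by (simp only: N)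
          finally show "\<sigma> * (normal_density \<mu> \<sigma> (\<sigma> * y) * ln ((\<sigma> * y)\<^sup>2)) = ln (\<sigma>\<^sup>2) * normal_density m 1 y + ln (y\<^sup>2) * normal_density m 1 y"
            by (simp add: algebra_simps)
        qed
      qed auto
      finally show ?thesis .
    qed
    also have "\<dots> = ln (\<sigma>\<^sup>2) * (\<integral>y. normal_density m 1 y \<partial>lborel) + gg m"
      unfolding gg_def
      by (subst Bochner_Integration.integral_add) (auto intro: int_g)
    finally show ?thesis by simp
  qed
  have E4: "ln (\<mu>\<^sup>2 + \<sigma>\<^sup>2) = ln (\<sigma>\<^sup>2) + ln (1 + m\<^sup>2)"
  proof -
    have "\<mu>\<^sup>2 + \<sigma>\<^sup>2 = \<sigma>\<^sup>2 * (1 + m\<^sup>2)" using s unfolding m_def by (simp add: field_simps power2_eq_square)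
    moreover have "0 < 1 + m\<^sup>2" by (simp add: add_pos_nonneg)
    ultimately show ?thesis using s by (simp add: ln_mult)
  qed
  have LHS: "ln (\<integral>\<omega>. (X \<omega>)\<^sup>2 \<partial>M) - (\<integral>\<omega>. ln ((X \<omega>)\<^sup>2) \<partial>M) = ln (1 + m\<^sup>2) - gg m"
    using E2 E3 E4 by simp
  have "m = 0 \<longleftrightarrow> \<mu> = 0" unfolding m_def using s by simp
  then show ?thesis unfolding LHS C1_eq E1 using key[of m] by auto
qed

end
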